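(* Consider the symmetric Markov process described in the context, satisfying Assumption (A) and the ergodicity condition (E$_s$). For each $x=(x_1,\dots,x_c)\in\{-1,1\}^c$, with $\eta_c:=-\frac1c\sum_{i=1}^c x_i$, the equation \[\eta_c^2\bigl(F(\beta_0)^2+4A(\beta_0)D(\beta_0)\bigr)=\bigl(B(\beta_0)+C(\beta_0)-\beta_0^K(A(1)+B(1)+C(1)+D(1))\bigr)^2\] has $2K$ solutions $\beta_0$ (counted with multiplicity) inside the unit circle $|\beta_0|<1$.
   Context: Fix integers $c\ge1$, $K\ge1$. Consider an irreducible continuous-time Markov process on $V\cup W$, where $V$ is finite and $W=\{\mathbf n=(n_0,\dots,n_c): n_0\in\{0,1,\dots\},\ n_i\in\{0,1\}\}$. It is symmetric: there are nonnegative rates $a_k,b_k,c_k,d_k$ ($k\le K$ integer), the same for every $i$. From $\mathbf n\in W$, for each $i\in\{1,\dots,c\}$ and $k\in\{-n_0,\dots,K\}$, the process jumps (changing only coordinates $0$ and $i$) from $(n_0,n_i)=(n_0,0)$ to $(n_0+k,1)$ at rate $a_k$ and to $(n_0+k,0)$ at rate $b_k$, and from $(n_0,1)$ to $(n_0+k,1)$ at rate $c_k$ and to $(n_0+k,0)$ at rate $d_k$; from $\mathbf n$ it jumps into $V$ with total rate $\sum_i\sum_{k\le-n_0-1}((1-n_i)(a_k+b_k)+n_i(c_k+d_k))$; no other transitions leave $W$, and from $V$ no transitions go to states with $n_0\ge K$. Let $A(z)=\sum_{k=-\infty}^K a_kz^{K-k}$, $B(z)=\sum_{k=-\infty}^K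 b_kz^{K-k}$, $C(z)=\sum_{k=-\infty}^K c_kz^{K-k}$, $D(z)=\sum_{k=-\infty}^K d_kz^{K-k}$ (power series in $z$), and $F(z)=z^K(A(1)+B(1)-C(1)-D(1))-B(z)+C(z)$. Assumption (A): (i) $A(1),B(1),C(1),D(1)<\infty$; (ii) $A(1),D(1)>0$; (iii) $A'(1),B'(1),C'(1),D'(1)<\infty$; (iv) $a_K=0$ or $d_K=0$; (v) $b_K=c_K\ne0$. Ergodicity condition (E$_s$): $0<D(1)(A'(1)-KA(1)+B'(1)-KB(1))+A(1)(C'(1)-KC(1)+D'(1)-KD(1))$. *)

theory Defs
  imports "HOL-Complex_Analysis.Complex_Analysis"
begin

text \<open>Rates are functions on the integers; only the values at k <= K are used.
  The generating function of a rate sequence r is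
  R(z) = sum_{k <= K} r_k z^(K-k) = sum_{n >= 0} r_(K-n) z^n.\<close>

definition gen_fun :: "nat \<Rightarrow> (int \<Rightarrow> real) \<Rightarrow> complex \<Rightarrow> complex" where
  "gen_fun K r z = (\<Sum>n. complex_of_real (r (int K - int n)) * z ^ n)"

definition gen_at1 :: "nat \<Rightarrow> (int \<Rightarrow> real) \<Rightarrow> real" where
  "gen_at1 K r = (\<Sum>n. r (int K - int n))"

definition gen_deriv_at1 :: "nat \<Rightarrow> (int \<Rightarrow> real) \<Rightarrow> real" where
  "gen_deriv_at1 K r = (\<Sum>n. real n * r (int K - int n))"

text \<open>States of W: (n0, ns) where ns i encodes n_i (True = 1) for i in {1..c},
  and ns i = False outside {1..c} (canonical representation).\<close>
type_synonym wstate = "nat \<times> (nat \<Rightarrow> bool)"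

definition Wset :: "nat \<Rightarrow> wstate set" where
  "Wset c = {(n0, ns). \<forall>i. ns i \<longrightarrow> 1 \<le> i \<and> i \<le> c}"

text \<open>Rate of a jump of size k of coordinate 0, with coordinate i going from u to v:
  (0 -> 1): a_k, (0 -> 0): b_k, (1 -> 1): c_k, (1 -> 0): d_k.\<close>
definition jump_rate ::
  "(int \<Rightarrow> real) \<Rightarrow> (int \<Rightarrow> real) \<Rightarrow> (int \<Rightarrow> real) \<Rightarrow> (int \<Rightarrow> real) \<Rightarrow> bool \<Rightarrow> bool \<Rightarrow> int \<Rightarrow> real" where
  "jump_rate a b cr d u v k =
     (if \<not> u \<and> v then a k else if \<not> u \<and> \<not> v then b k else if u \<and> v then cr k else d k)"

text \<open>Transition rate within W (total over all i producing the same target).\<close>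
definition qWW ::
  "nat \<Rightarrow> nat \<Rightarrow> (int \<Rightarrow> real) \<Rightarrow> (int \<Rightarrow> real) \<Rightarrow> (int \<Rightarrow> real) \<Rightarrow> (int \<Rightarrow> real)
   \<Rightarrow> wstate \<Rightarrow> wstate \<Rightarrow> real" where
  "qWW c K a b cr d w w' =
     (\<Sum>i\<in>{1..c}.
        if (\<forall>j. j \<noteq> i \<longrightarrow> snd w' j = snd w j) \<and> int (fst w') - int (fst w) \<le> int K
        then jump_rate a b cr d (snd w i) (snd w' i) (int (fst w') - int (fst w)) else 0)"

definition exit_rate ::
  "nat \<Rightarrow> (int \<Rightarrow> real) \<Rightarrow> (int \<Rightarrow> real) \<Rightarrow> (int \<Rightarrow> real) \<Rightarrow> (int \<Rightarrow> real) \<Rightarrow> wstate \<Rightarrow> real" where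
  "exit_rate c a b cr d w =
     (\<Sum>i\<in>{1..c}. \<Sum>m. (let k = - int (fst w) - 1 - int m in
        if snd w i then cr k + d k else a k + b k))"

definition pos_rel ::
  "nat \<Rightarrow> nat \<Rightarrow> (int \<Rightarrow> real) \<Rightarrow> (int \<Rightarrow> real) \<Rightarrow> (int \<Rightarrow> real) \<Rightarrow> (int \<Rightarrow> real)
   \<Rightarrow> 'v set \<Rightarrow> ('v \<Rightarrow> 'v \<Rightarrow> real) \<Rightarrow> ('v \<Rightarrow> wstate \<Rightarrow> real) \<Rightarrow> (wstate \<Rightarrow> 'v \<Rightarrow> real)
   \<Rightarrow> ('v + wstate) rel" where
  "pos_rel c K a b cr d V qVV qVW qWV =
     {(Inl v, Inl v') | v v'. v \<in> V \<and> v' \<in> V \<and> qVV v v' > 0}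
   \<union> {(Inl v, Inr w) | v w. v \<in> V \<and> w \<in> Wset c \<and> qVW v w > 0}
   \<union> {(Inr w, Inr w') | w w'. w \<in> Wset c \<and> w' \<in> Wset c \<and> qWW c K a b cr d w w' > 0}
   \<union> {(Inr w, Inl v) | w v. w \<in> Wset c \<and> v \<in> V \<and> qWV w v > 0}"

definition sym_process ::
  "nat \<Rightarrow> nat \<Rightarrow> (int \<Rightarrow> real) \<Rightarrow> (int \<Rightarrow> real) \<Rightarrow> (int \<Rightarrow> real) \<Rightarrow> (int \<Rightarrow> real)
   \<Rightarrow> 'v set \<Rightarrow> ('v \<Rightarrow> 'v \<Rightarrow> real) \<Rightarrow> ('v \<Rightarrow> wstate \<Rightarrow> real) \<Rightarrow> (wstate \<Rightarrow> 'v \<Rightarrow> real) \<Rightarrow> bool" where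
  "sym_process c K a b cr d V qVV qVW qWV \<longleftrightarrow>
     finite V \<and>
     (\<forall>k \<le> int K. a k \<ge> 0 \<and> b k \<ge> 0 \<and> cr k \<ge> 0 \<and> d k \<ge> 0) \<and>
     (\<forall>v v'. qVV v v' \<ge> 0) \<and> (\<forall>v w. qVW v w \<ge> 0) \<and> (\<forall>w v. qWV w v \<ge> 0) \<and>
     (\<forall>w \<in> Wset c. (\<Sum>v\<in>V. qWV w v) = exit_rate c a b cr d w) \<and>
     (\<forall>v \<in> V. \<forall>w. fst w \<ge> K \<longrightarrow> qVW v w = 0) \<and>
     (\<forall>s \<in> Inl ` V \<union> Inr ` Wset c. \<forall>t \<in> Inl ` V \<union> Inr ` Wset c.
        (s, t) \<in> (pos_rel c K a b cr d V qVV qVW qWV)\<^sup>*)"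

end

theory Submission
  imports Defs
begin


lemma wind_sum:
  fixes h :: "complex \<Rightarrow> complex"
  assumes r: "0 < r" "r < r'"
    and fin: "finite {p\<in>ball 0 r'. h p = 0}"
    and nz: "\<And>z. norm z = r \<Longrightarrow> h z \<noteq> 0"
  shows "(\<Sum>p\<in>{p\<in>ball 0 r'. h p = 0}. winding_number (circlepath 0 r) p * of_int (zorder h p))
       = of_int (\<Sum>p\<in>{p\<in>ball 0 r. h p = 0}. zorder h p)"
proof -
  have sub: "{p\<in>ball 0 r. h p = 0} \<subseteq> {p\<in>ball 0 r'. h p = 0}" using r by auto
  have "(\<Sum>p\<in>{p\<in>ball 0 r'. h p = 0}. winding_number (circlepath 0 r) p * of_int (zorder h p))
      = (\<Sum>p\<in>{p\<in>ball 0 r. h p = 0}. winding_number (circlepath 0 r) p * of_int (zorder h p))"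
  proof (rule sum.mono_neutral_right[OF fin sub])
    show "\<forall>i\<in>{p \<in> ball 0 r'. h p = 0} - {p \<in> ball 0 r. h p = 0}.
          winding_number (circlepath 0 r) i * of_int (zorder h i) = 0"
    proof
      fix p assume p: "p \<in> {p \<in> ball 0 r'. h p = 0} - {p \<in> ball 0 r. h p = 0}"
      then have "norm p \<ge> r" "h p = 0" by auto
      with nz have "norm p > r" by force
      then have "p \<notin> cball 0 r" by auto
      then have "winding_number (circlepath 0 r) p = 0"
        by (intro winding_number_zero_outside[of _ "cball 0 r"]) (use r in auto)
      then show "winding_number (circlepath 0 r) p * of_int (zorder h p) = 0" by simp
    qed
  qed
  also have "\<dots> = (\<Sum>p\<in>{p\<in>ball 0 r. h p = 0}. of_int (zorder h p))"
    by (intro sum.cong refl) (auto simp: winding_number_circlepath)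
  finally show ?thesis by simp
qed

lemma finite_zeros_disc:
  fixes f :: "complex \<Rightarrow> complex"
  assumes hf: "f holomorphic_on ball 0 1" and r': "r' < 1" and ex: "f z0 \<noteq> 0" "norm z0 < 1"
  shows "finite {p\<in>ball 0 r'. f p = 0}"
proof (cases "f constant_on ball 0 1")
  case True
  then obtain c where c: "\<And>z. z \<in> ball 0 1 \<Longrightarrow> f z = c" by (auto simp: constant_on_def)
  with ex have "c \<noteq> 0" by auto
  with c r' have "{p\<in>ball 0 r'. f p = 0} = {}" by auto
  then show ?thesis by (metis finite.emptyI)
next
  case False
  have "finite {z\<in>cball 0 r'. f z = 0}"
    by (rule holomorphic_compact_finite_zeros[OF hf _ _ _ _ False]) (use r' in auto)
  then show ?thesis by (rule rev_finite_subset) auto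
qed

lemma rouche_disc:
  fixes f g :: "complex \<Rightarrow> complex"
  assumes hf: "f holomorphic_on ball 0 1" and hg: "g holomorphic_on ball 0 1"
    and r: "0 < r" "r < 1"
    and less: "\<And>z. norm z = r \<Longrightarrow> norm (g z) < norm (f z)"
  shows "finite {p\<in>ball 0 r. f p + g p = 0} \<and> finite {p\<in>ball 0 r. f p = 0} \<and>
   (\<Sum>p\<in>{p\<in>ball 0 r. f p + g p = 0}. zorder (\<lambda>p. f p + g p) p) = (\<Sum>p\<in>{p\<in>ball 0 r. f p = 0}. zorder f p)"
proof -
  define r' where "r' = (1 + r) / 2"
  have r': "r < r'" "r' < 1" using r by (auto simp: r'_def)
  have z0: "norm (complex_of_real r) = r" "norm (complex_of_real r) < 1" using r by auto
  have nzf: "f z \<noteq> 0" and nzfg: "f z + g z \<noteq> 0" if "norm z = r" for z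
  proof -
    from less[OF that] have "norm (g z) < norm (f z)" .
    then show "f z \<noteq> 0" by auto
    show "f z + g z \<noteq> 0"
    proof
      assume "f z + g z = 0"
      then have "g z = - f z" by (simp add: eq_neg_iff_add_eq_0 add.commute)
      with \<open>norm (g z) < norm (f z)\<close> show False by simp
    qed
  qed
  have hfg: "(\<lambda>p. f p + g p) holomorphic_on ball 0 1" using hf hg by (intro holomorphic_intros)
  have fin1: "finite {p\<in>ball 0 r'. f p + g p = 0}"
    by (rule finite_zeros_disc[OF hfg r'(2) nzfg[OF z0(1)] z0(2)])
  have fin2: "finite {p\<in>ball 0 r'. f p = 0}"
    by (rule finite_zeros_disc[OF hf r'(2) nzf[OF z0(1)] z0(2)])
  have sub: "ball 0 r' \<subseteq> ball (0::complex) 1" using r' by auto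
  have R: "(\<Sum>p\<in>{p\<in>ball 0 r'. f p + g p = 0}. winding_number (circlepath 0 r) p * zorder (\<lambda>p. f p + g p) p)
          = (\<Sum>p\<in>{p\<in>ball 0 r'. f p = 0}. winding_number (circlepath 0 r) p * zorder f p)"
  proof (rule Rouche_theorem)
    show "open (ball (0::complex) r')" "connected (ball (0::complex) r')" by auto
    show "finite {p \<in> ball 0 r'. f p + g p = 0}" by (fact fin1)
    show "finite {p \<in> ball 0 r'. f p = 0}" by (fact fin2)
    show "f holomorphic_on ball 0 r'" "g holomorphic_on ball 0 r'"
      using hf hg sub by (auto intro: holomorphic_on_subset)
    show "valid_path (circlepath 0 r)" by simp
    show "pathfinish (circlepath 0 r) = pathstart (circlepath 0 r)" by simp
    show "path_image (circlepath 0 r) \<subseteq> ball 0 r'" using r r' by (auto simp: path_image_circlepath)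
    show "\<forall>z\<in>path_image (circlepath 0 r). cmod (g z) < cmod (f z)"
      using r less by (auto simp: path_image_circlepath)
    show "\<forall>z. z \<notin> ball 0 r' \<longrightarrow> winding_number (circlepath 0 r) z = 0"
    proof (intro allI impI)
      fix z :: complex assume "z \<notin> ball 0 r'"
      then have "z \<notin> cball 0 r" using r' by auto
      then show "winding_number (circlepath 0 r) z = 0"
        by (intro winding_number_zero_outside[of _ "cball 0 r"]) (use r in \<open>auto simp: path_image_circlepath\<close>)
    qed
  qed
  have e1: "(\<Sum>p\<in>{p\<in>ball 0 r'. f p + g p = 0}. winding_number (circlepath 0 r) p * of_int (zorder (\<lambda>p. f p + g p) p))
       = of_int (\<Sum>p\<in>{p\<in>ball 0 r. f p + g p = 0}. zorder (\<lambda>p. f p + g p) p)"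
    by (rule wind_sum[OF r(1) r'(1) fin1]) (use nzfg in auto)
  have e2: "(\<Sum>p\<in>{p\<in>ball 0 r'. f p = 0}. winding_number (circlepath 0 r) p * of_int (zorder f p))
       = of_int (\<Sum>p\<in>{p\<in>ball 0 r. f p = 0}. zorder f p)"
    by (rule wind_sum[OF r(1) r'(1) fin2]) (use nzf in auto)
  have "complex_of_int (\<Sum>p\<in>{p\<in>ball 0 r. f p + g p = 0}. zorder (\<lambda>p. f p + g p) p)
      = complex_of_int (\<Sum>p\<in>{p\<in>ball 0 r. f p = 0}. zorder f p)"
    by (simp only: e1[symmetric] e2[symmetric] R)
  then have eq: "(\<Sum>p\<in>{p\<in>ball 0 r. f p + g p = 0}. zorder (\<lambda>p. f p + g p) p) = (\<Sum>p\<in>{p\<in>ball 0 r. f p = 0}. zorder f p)"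
    by (simp only: of_int_eq_iff)
  have s1: "{p\<in>ball 0 r. f p + g p = 0} \<subseteq> {p\<in>ball 0 r'. f p + g p = 0}"
    and s2: "{p\<in>ball 0 r. f p = 0} \<subseteq> {p\<in>ball 0 r'. f p = 0}" using r' by auto
  show ?thesis using eq rev_finite_subset[OF fin1 s1] rev_finite_subset[OF fin2 s2] by blast
qed



definition powc :: "(nat \<Rightarrow> real) \<Rightarrow> complex \<Rightarrow> complex" where
  "powc co z = (\<Sum>n. complex_of_real (co n) * z ^ n)"
definition Rr :: "(nat \<Rightarrow> real) \<Rightarrow> real \<Rightarrow> real" where
  "Rr co t = (\<Sum>n. co n * t ^ n)"
definition psi :: "(nat \<Rightarrow> real) \<Rightarrow> real \<Rightarrow> real" where
  "psi co t = (\<Sum>n. co n * (\<Sum>j<n. t ^ j))"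

lemma powc_holo:
  assumes "summable co"
  shows "powc co holomorphic_on ball 0 1"
proof -
  define F where "F = Abs_fps (\<lambda>n. complex_of_real (co n))"
  have eq: "powc co = eval_fps F" by (auto simp: powc_def eval_fps_def F_def fun_eq_iff)
  have "summable (\<lambda>n. fps_nth F n * 1 ^ n)" using assms by (simp add: F_def)
  then have "conv_radius (fps_nth F) \<ge> norm (1::complex)" by (rule conv_radius_geI)
  then have "fps_conv_radius F \<ge> ereal 1" by (simp add: fps_conv_radius_def)
  then have "ball 0 1 \<subseteq> eball 0 (fps_conv_radius F)" by (rule ball_eball_mono)
  then show ?thesis unfolding eq by (rule holomorphic_on_eval_fps)
qed

lemma Rr_summable:
  fixes co :: "nat \<Rightarrow> real" and t :: real
  assumes nn: "\<And>n. co n \<ge> 0" and sm: "summable co" and t: "0 \<le> t" "t \<le> 1"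
  shows "summable (\<lambda>n. co n * t ^ n)"
proof (rule summable_comparison_test'[OF sm])
  fix n :: nat
  have "t ^ n \<le> 1" using t by (simp add: power_le_one)
  then show "norm (co n * t ^ n) \<le> co n" using nn[of n] t
    by (simp add: abs_mult mult_left_le)
qed

lemma powc_norm:
  fixes co :: "nat \<Rightarrow> real"
  assumes nn: "\<And>n. co n \<ge> 0" and sm: "summable co" and z: "norm z \<le> 1"
  shows "norm (powc co z) \<le> Rr co (norm z)"
proof -
  have eqn: "norm (complex_of_real (co n) * z ^ n) = co n * norm z ^ n" for n
    using nn[of n] by (simp add: norm_mult norm_power)
  have "summable (\<lambda>n. co n * norm z ^ n)" by (rule Rr_summable[OF nn sm]) (use z in auto)
  then have s: "summable (\<lambda>n. norm (complex_of_real (co n) * z ^ n))" by (simp only: eqn)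
  have "norm (powc co z) \<le> (\<Sum>n. norm (complex_of_real (co n) * z ^ n))"
    unfolding powc_def by (rule summable_norm[OF s])
  also have "\<dots> = Rr co (norm z)" by (simp only: eqn Rr_def)
  finally show ?thesis .
qed

lemma powc_real:
  fixes co :: "nat \<Rightarrow> real" and t :: real
  assumes nn: "\<And>n. co n \<ge> 0" and sm: "summable co" and t: "0 \<le> t" "t \<le> 1"
  shows "powc co (complex_of_real t) = complex_of_real (Rr co t)"
proof -
  have s: "summable (\<lambda>n. co n * t ^ n)" by (rule Rr_summable[OF nn sm t])
  have "complex_of_real (Rr co t) = (\<Sum>n. complex_of_real (co n * t ^ n))"
    unfolding Rr_def by (rule suminf_of_real[OF s])
  then show ?thesis by (simp add: powc_def)
qed

lemma Rr_1: "Rr co 1 = suminf co" by (simp add: Rr_def)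

lemma psi_summable:
  fixes co :: "nat \<Rightarrow> real" and t :: real
  assumes nn: "\<And>n. co n \<ge> 0" and sm1: "summable (\<lambda>n. real n * co n)" and t: "0 \<le> t" "t \<le> 1"
  shows "summable (\<lambda>n. co n * (\<Sum>j<n. t ^ j))"
proof (rule summable_comparison_test'[OF sm1])
  fix n :: nat
  have "(\<Sum>j<n. t ^ j) \<le> (\<Sum>j<n. 1)" by (intro sum_mono) (use t in \<open>simp add: power_le_one\<close>)
  moreover have "0 \<le> (\<Sum>j<n. t ^ j)" by (intro sum_nonneg) (use t in simp)
  ultimately have "co n * (\<Sum>j<n. t ^ j) \<le> co n * real n" using nn[of n]
    by (intro mult_left_mono) auto
  with \<open>0 \<le> (\<Sum>j<n. t ^ j)\<close> show "norm (co n * (\<Sum>j<n. t ^ j)) \<le> real n * co n" using nn[of n]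
    by (simp add: abs_mult mult.commute)
qed

lemma Rr_diff:
  fixes co :: "nat \<Rightarrow> real" and t :: real
  assumes nn: "\<And>n. co n \<ge> 0" and sm: "summable co" and sm1: "summable (\<lambda>n. real n * co n)"
    and t: "0 \<le> t" "t \<le> 1"
  shows "Rr co t = suminf co - (1 - t) * psi co t"
proof -
  have s1: "summable (\<lambda>n. co n * t ^ n)" by (rule Rr_summable[OF nn sm t])
  have s2: "summable (\<lambda>n. co n * (\<Sum>j<n. t ^ j))" by (rule psi_summable[OF nn sm1 t])
  have "suminf co - Rr co t = (\<Sum>n. co n - co n * t ^ n)"
    unfolding Rr_def by (rule suminf_diff[OF sm s1])
  also have "\<dots> = (\<Sum>n. (1 - t) * (co n * (\<Sum>j<n. t ^ j)))"
  proof (intro suminf_cong)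
    fix n
    have "co n - co n * t ^ n = co n * (1 - t ^ n)" by (simp add: algebra_simps)
    also have "\<dots> = co n * ((1 - t) * (\<Sum>j<n. t ^ j))" by (simp only: one_diff_power_eq)
    also have "\<dots> = (1 - t) * (co n * (\<Sum>j<n. t ^ j))" by (simp only: ac_simps)
    finally show "co n - co n * t ^ n = (1 - t) * (co n * (\<Sum>j<n. t ^ j))" .
  qed
  also have "\<dots> = (1 - t) * psi co t"
    unfolding psi_def by (rule suminf_mult[OF s2])
  finally show ?thesis by simp
qed

lemma psi_lim:
  fixes co :: "nat \<Rightarrow> real"
  assumes nn: "\<And>n. co n \<ge> 0" and sm1: "summable (\<lambda>n. real n * co n)"
  shows "(psi co \<longlongrightarrow> (\<Sum>n. real n * co n)) (at_left 1)"
proof -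
  have ev: "\<forall>\<^sub>F t in at_left (1::real). 0 < t \<and> t < 1"
    using eventually_at_left_real[of 0 "1::real"] by (auto elim!: eventually_mono)
  have ev2: "\<forall>\<^sub>F (k, t) in (at_top::nat filter) \<times>\<^sub>F at_left (1::real). 0 < t \<and> t < 1"
    using ev trivial_limit_at_top_linorder by (subst eventually_prod2) auto
  have bound: "\<forall>\<^sub>F (k, t) in at_top \<times>\<^sub>F at_left (1::real). norm (co k * (\<Sum>j<k. t ^ j)) \<le> real k * co k"
    using ev2
  proof (rule eventually_mono)
    fix kt :: "nat \<times> real" assume "case kt of (k, t) \<Rightarrow> 0 < t \<and> t < 1"
    then obtain k t where kt: "kt = (k, t)" "0 < t" "t < 1" by (cases kt) auto
    have "(\<Sum>j<k. t ^ j) \<le> (\<Sum>j<k. 1)" by (intro sum_mono) (use kt in \<open>simp add: power_le_one\<close>)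
    moreover have "0 \<le> (\<Sum>j<k. t ^ j)" by (intro sum_nonneg) (use kt in simp)
    ultimately have "co k * (\<Sum>j<k. t ^ j) \<le> co k * real k" using nn[of k]
      by (intro mult_left_mono) auto
    with \<open>0 \<le> (\<Sum>j<k. t ^ j)\<close> have "norm (co k * (\<Sum>j<k. t ^ j)) \<le> real k * co k" using nn[of k]
      by (simp add: abs_mult mult.commute)
    then show "case kt of (k, t) \<Rightarrow> norm (co k * (\<Sum>j<k. t ^ j)) \<le> real k * co k" using kt by simp
  qed
  have lim: "((\<lambda>t. co k * (\<Sum>j<k. t ^ j)) \<longlongrightarrow> real k * co k) (at_left 1)" for k
  proof -
    have "((\<lambda>t::real. co k * (\<Sum>j<k. t ^ j)) \<longlongrightarrow> co k * (\<Sum>j<k. 1 ^ j)) (at_left 1)"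
      by (intro tendsto_intros)
    then show ?thesis by (simp add: mult.commute)
  qed
  have "((\<lambda>t. \<Sum>k. co k * (\<Sum>j<k. t ^ j)) \<longlongrightarrow> (\<Sum>k. real k * co k)) (at_left 1)"
    using tannerys_theorem[OF lim bound sm1] by simp
  then show ?thesis unfolding psi_def[abs_def] .
qed



lemma ring_id1: "(A1 - x * U) * (D1 - x * W) - (A1 - x * pa) * (D1 - x * pd)
   = x * (A1 * pd + D1 * pa - A1 * W - D1 * U + x * (U * W - pa * pd))" for A1 x U D1 W pa pd :: real
  by (simp add: algebra_simps)

lemma real_key:
  fixes al be ga de :: "nat \<Rightarrow> real" and K :: nat
  assumes nn: "\<And>n. al n \<ge> 0" "\<And>n. be n \<ge> 0" "\<And>n. ga n \<ge> 0" "\<And>n. de n \<ge> 0"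
    and sm: "summable al" "summable be" "summable ga" "summable de"
    and sm1: "summable (\<lambda>n. real n * al n)" "summable (\<lambda>n. real n * be n)"
             "summable (\<lambda>n. real n * ga n)" "summable (\<lambda>n. real n * de n)"
    and A1: "suminf al > 0" and D1: "suminf de > 0"
    and E: "0 < suminf de * ((\<Sum>n. real n * al n) - real K * suminf al + (\<Sum>n. real n * be n) - real K * suminf be)
             + suminf al * ((\<Sum>n. real n * ga n) - real K * suminf ga + (\<Sum>n. real n * de n) - real K * suminf de)"
  shows "\<exists>r0<1. \<forall>\<rho>. r0 < \<rho> \<and> \<rho> < 1 \<longrightarrow> 0 < \<rho> \<and>
     0 < \<rho> ^ K * (suminf al + suminf be) - Rr be \<rho> \<and>
     0 < \<rho> ^ K * (suminf ga + suminf de) - Rr ga \<rho> \<and>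
     Rr al \<rho> * Rr de \<rho> < (\<rho> ^ K * (suminf al + suminf be) - Rr be \<rho>) * (\<rho> ^ K * (suminf ga + suminf de) - Rr ga \<rho>)"
proof -
  define a1 where "a1 = suminf al"
  define b1 where "b1 = suminf be"
  define c1 where "c1 = suminf ga"
  define d1 where "d1 = suminf de"
  define a' where "a' = (\<Sum>n. real n * al n)"
  define b' where "b' = (\<Sum>n. real n * be n)"
  define c' where "c' = (\<Sum>n. real n * ga n)"
  define d' where "d' = (\<Sum>n. real n * de n)"
  define P where "P = a1 + b1"
  define Q where "Q = c1 + d1"
  define q where "q = (\<lambda>t::real. \<Sum>j<K. t ^ j)"
  define U where "U = (\<lambda>t. q t * P - psi be t)"
  define W where "W = (\<lambda>t. q t * Q - psi ga t)"
  define ut where "ut = (\<lambda>t. a1 - (1 - t) * U t)"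
  define vt where "vt = (\<lambda>t. d1 - (1 - t) * W t)"
  define br where "br = (\<lambda>t. a1 * psi de t + d1 * psi al t - a1 * W t - d1 * U t
        + (1 - t) * (U t * W t - psi al t * psi de t))"
  have la: "(psi al \<longlongrightarrow> a') (at_left 1)" unfolding a'_def by (rule psi_lim[OF nn(1) sm1(1)])
  have lb: "(psi be \<longlongrightarrow> b') (at_left 1)" unfolding b'_def by (rule psi_lim[OF nn(2) sm1(2)])
  have lc: "(psi ga \<longlongrightarrow> c') (at_left 1)" unfolding c'_def by (rule psi_lim[OF nn(3) sm1(3)])
  have ld: "(psi de \<longlongrightarrow> d') (at_left 1)" unfolding d'_def by (rule psi_lim[OF nn(4) sm1(4)])
  have lq: "(q \<longlongrightarrow> real K) (at_left 1)"
  proof -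
    have "((\<lambda>t::real. \<Sum>j<K. t ^ j) \<longlongrightarrow> (\<Sum>j<K. 1 ^ j)) (at_left 1)" by (intro tendsto_intros)
    then show ?thesis by (simp add: q_def)
  qed
  have lx: "((\<lambda>t::real. 1 - t) \<longlongrightarrow> 0) (at_left 1)"
  proof -
    have "((\<lambda>t::real. 1 - t) \<longlongrightarrow> 1 - 1) (at_left 1)" by (intro tendsto_intros)
    then show ?thesis by simp
  qed
  have lU: "(U \<longlongrightarrow> real K * P - b') (at_left 1)" unfolding U_def by (intro tendsto_intros lq lb)
  have lW: "(W \<longlongrightarrow> real K * Q - c') (at_left 1)" unfolding W_def by (intro tendsto_intros lq lc)
  have lu: "(ut \<longlongrightarrow> a1 - 0 * (real K * P - b')) (at_left 1)" unfolding ut_def by (intro tendsto_intros lx lU)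
  have lv: "(vt \<longlongrightarrow> d1 - 0 * (real K * Q - c')) (at_left 1)" unfolding vt_def by (intro tendsto_intros lx lW)
  have lbr: "(br \<longlongrightarrow> a1 * d' + d1 * a' - a1 * (real K * Q - c') - d1 * (real K * P - b')
        + 0 * ((real K * P - b') * (real K * Q - c') - a' * d')) (at_left 1)"
    unfolding br_def by (intro tendsto_intros lx lU lW la ld)
  have Epos: "0 < a1 * d' + d1 * a' - a1 * (real K * Q - c') - d1 * (real K * P - b')"
    using E unfolding a1_def b1_def c1_def d1_def a'_def b'_def c'_def d'_def P_def Q_def
    by (simp add: algebra_simps)
  have e1: "\<forall>\<^sub>F t in at_left 1. 0 < ut t" using order_tendstoD(1)[OF lu] A1 by (simp add: a1_def)
  have e2: "\<forall>\<^sub>F t in at_left 1. 0 < vt t" using order_tendstoD(1)[OF lv] D1 by (simp add: d1_def)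
  have e3: "\<forall>\<^sub>F t in at_left 1. 0 < br t" using order_tendstoD(1)[OF lbr] Epos by simp
  have e4: "\<forall>\<^sub>F t in at_left (1::real). 0 < t \<and> t < 1"
    using eventually_at_left_real[of 0 "1::real"] by (auto elim!: eventually_mono)
  have "\<forall>\<^sub>F t in at_left 1. 0 < t \<and>
     0 < t ^ K * (a1 + b1) - Rr be t \<and>
     0 < t ^ K * (c1 + d1) - Rr ga t \<and>
     Rr al t * Rr de t < (t ^ K * (a1 + b1) - Rr be t) * (t ^ K * (c1 + d1) - Rr ga t)"
    using e1 e2 e3 e4
  proof eventually_elim
    case (elim t)
    then have t: "0 \<le> t" "t \<le> 1" "0 < 1 - t" by auto
    have ra: "Rr al t = a1 - (1 - t) * psi al t" unfolding a1_def by (rule Rr_diff[OF nn(1) sm(1) sm1(1) t(1,2)])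
    have rb: "Rr be t = b1 - (1 - t) * psi be t" unfolding b1_def by (rule Rr_diff[OF nn(2) sm(2) sm1(2) t(1,2)])
    have rc: "Rr ga t = c1 - (1 - t) * psi ga t" unfolding c1_def by (rule Rr_diff[OF nn(3) sm(3) sm1(3) t(1,2)])
    have rd: "Rr de t = d1 - (1 - t) * psi de t" unfolding d1_def by (rule Rr_diff[OF nn(4) sm(4) sm1(4) t(1,2)])
    have tk: "t ^ K = 1 - (1 - t) * q t" unfolding q_def using one_diff_power_eq[of t K] by simp
    have u: "t ^ K * (a1 + b1) - Rr be t = ut t"
      unfolding ut_def U_def P_def rb tk by (simp add: algebra_simps)
    have v: "t ^ K * (c1 + d1) - Rr ga t = vt t"
      unfolding vt_def W_def Q_def rc tk by (simp add: algebra_simps)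
    have idf: "ut t * vt t - Rr al t * Rr de t = (1 - t) * br t"
      unfolding ut_def vt_def ra rd br_def by (rule ring_id1)
    have pos: "0 < (1 - t) * br t" using t elim by simp
    have "Rr al t * Rr de t < ut t * vt t" using idf pos by linarith
    then show ?case using u v elim by simp
  qed
  then obtain r0 where "r0 < 1" "\<And>y. r0 < y \<Longrightarrow> y < 1 \<Longrightarrow> 0 < y \<and>
     0 < y ^ K * (a1 + b1) - Rr be y \<and>
     0 < y ^ K * (c1 + d1) - Rr ga y \<and>
     Rr al y * Rr de y < (y ^ K * (a1 + b1) - Rr be y) * (y ^ K * (c1 + d1) - Rr ga y)"
    unfolding eventually_at_left_field by blast
  then show ?thesis unfolding a1_def b1_def c1_def d1_def by blast
qed



lemma rouche_disc':
  fixes f g h :: "complex \<Rightarrow> complex"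
  assumes "f holomorphic_on ball 0 1" and "g holomorphic_on ball 0 1"
    and "0 < r" "r < 1"
    and "\<And>z. norm z = r \<Longrightarrow> norm (g z) < norm (f z)"
    and hfg: "\<And>z. h z = f z + g z"
  shows "finite {p\<in>ball 0 r. h p = 0} \<and> finite {p\<in>ball 0 r. f p = 0} \<and>
   (\<Sum>p\<in>{p\<in>ball 0 r. h p = 0}. zorder h p) = (\<Sum>p\<in>{p\<in>ball 0 r. f p = 0}. zorder f p)"
proof -
  have "h = (\<lambda>p. f p + g p)" using hfg by (simp add: fun_eq_iff)
  then show ?thesis using rouche_disc[OF assms(1-5)] by simp
qed

lemma mono_count:
  fixes c :: complex
  assumes c: "c \<noteq> 0" and n: "n \<ge> 1" and r: "0 < r"
  shows "(\<Sum>p\<in>{p\<in>ball 0 r. c * p ^ n = 0}. zorder (\<lambda>z. c * z ^ n) p) = int n"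
proof -
  have Z: "{p\<in>ball 0 r. c * p ^ n = 0} = {0}" using c n r by auto
  have "zorder (\<lambda>z. c * z ^ n) 0 = int n"
  proof (rule zorder_eqI[of UNIV 0 "\<lambda>_. c"])
    fix w :: complex assume "w \<in> UNIV" "w \<noteq> 0"
    show "c * w ^ n = c * (w - 0) powi int n" by (simp add: power_int_def)
  qed (use c in auto)
  then show ?thesis unfolding Z by simp
qed

lemma lin_lb:
  fixes w Bz Cz :: complex and t s P Q Br Cr Wn :: real
  assumes "0 \<le> t" "0 \<le> s" "0 \<le> P" "0 \<le> Q" "norm w = Wn" "norm Bz \<le> Br" "norm Cz \<le> Cr"
  shows "t * (Wn * P - Br) + s * (Wn * Q - Cr)
     \<le> norm (w * complex_of_real (t * P + s * Q) - (complex_of_real t * Bz + complex_of_real s * Cz))"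
proof -
  have "norm (complex_of_real t * Bz + complex_of_real s * Cz) \<le> t * Br + s * Cr"
  proof -
    have "norm (complex_of_real t * Bz + complex_of_real s * Cz)
        \<le> norm (complex_of_real t * Bz) + norm (complex_of_real s * Cz)" by (rule norm_triangle_ineq)
    also have "\<dots> = t * norm Bz + s * norm Cz" using assms by (simp add: norm_mult)
    also have "\<dots> \<le> t * Br + s * Cr" using assms by (intro add_mono mult_left_mono) auto
    finally show ?thesis .
  qed
  moreover have "norm (w * complex_of_real (t * P + s * Q)) = Wn * (t * P + s * Q)"
  proof -
    have nn: "0 \<le> t * P + s * Q" using assms by simp
    show ?thesis by (simp only: norm_mult norm_of_real abs_of_nonneg[OF nn] assms(5))
  qed
  moreover have "norm (w * complex_of_real (t * P + s * Q)) - norm (complex_of_real t * Bz + complex_of_real s * Cz)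
     \<le> norm (w * complex_of_real (t * P + s * Q) - (complex_of_real t * Bz + complex_of_real s * Cz))"
    by (rule norm_triangle_ineq2)
  ultimately show ?thesis by (simp add: algebra_simps)
qed

lemma prod_lb:
  fixes t s u v :: real
  assumes "0 \<le> t" "0 \<le> s" "s + t = 1"
  shows "u * v \<le> (t * u + s * v) * (s * u + t * v)"
proof -
  have s: "s = 1 - t" using assms(3) by simp
  have "(t * u + s * v) * (s * u + t * v) - u * v = s * t * (u - v)^2"
    unfolding s by (simp add: algebra_simps power2_eq_square)
  moreover have "0 \<le> s * t * (u - v)^2" using assms by simp
  ultimately show ?thesis by linarith
qed



lemma idG_alg:
  fixes E w a b c d Az Bz Cz Dz :: complex
  shows "E^2 * ((w*(a+b-c-d) - Bz + Cz)^2 + 4*Az*Dz) - (Bz+Cz - w*(a+b+c+d))^2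
   = -4*((w*((1-E)/2*(a+b) + (1+E)/2*(c+d)) - ((1-E)/2*Bz + (1+E)/2*Cz))
        * (w*((1+E)/2*(a+b)+(1-E)/2*(c+d)) - ((1+E)/2*Bz + (1-E)/2*Cz))) + 4*E^2*(Az*Dz)"
  by (simp add: field_simps power2_eq_square)

lemma main_count:
  fixes al be ga de :: "nat \<Rightarrow> real" and K :: nat and \<eta> :: real
  assumes K: "K \<ge> 1"
    and nn: "\<And>n. al n \<ge> 0" "\<And>n. be n \<ge> 0" "\<And>n. ga n \<ge> 0" "\<And>n. de n \<ge> 0"
    and sm: "summable al" "summable be" "summable ga" "summable de"
    and sm1: "summable (\<lambda>n. real n * al n)" "summable (\<lambda>n. real n * be n)"
             "summable (\<lambda>n. real n * ga n)" "summable (\<lambda>n. real n * de n)"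
    and A1: "suminf al > 0" and D1: "suminf de > 0"
    and E: "0 < suminf de * ((\<Sum>n. real n * al n) - real K * suminf al + (\<Sum>n. real n * be n) - real K * suminf be)
             + suminf al * ((\<Sum>n. real n * ga n) - real K * suminf ga + (\<Sum>n. real n * de n) - real K * suminf de)"
    and eta: "\<eta>\<^sup>2 \<le> 1"
    and Gdef: "\<And>z. G z = complex_of_real (\<eta>\<^sup>2) *
        ((z ^ K * complex_of_real (suminf al + suminf be - suminf ga - suminf de) - powc be z + powc ga z)\<^sup>2
          + 4 * powc al z * powc de z)
        - (powc be z + powc ga z - z ^ K * complex_of_real (suminf al + suminf be + suminf ga + suminf de))\<^sup>2"
  shows "finite {z. norm z < 1 \<and> G z = 0} \<and> (\<Sum>z\<in>{z. norm z < 1 \<and> G z = 0}. nat (zorder G z)) = 2 * K"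
proof -
  obtain r0 where r0: "r0 < 1" and key: "\<And>\<rho>. r0 < \<rho> \<Longrightarrow> \<rho> < 1 \<Longrightarrow> 0 < \<rho> \<and>
     0 < \<rho> ^ K * (suminf al + suminf be) - Rr be \<rho> \<and>
     0 < \<rho> ^ K * (suminf ga + suminf de) - Rr ga \<rho> \<and>
     Rr al \<rho> * Rr de \<rho> < (\<rho> ^ K * (suminf al + suminf be) - Rr be \<rho>) * (\<rho> ^ K * (suminf ga + suminf de) - Rr ga \<rho>)"
    using real_key[OF nn sm sm1 A1 D1 E] by blast
  define A where "A = powc al"
  define B where "B = powc be"
  define C where "C = powc ga"
  define D where "D = powc de"
  define Pr where "Pr = suminf al + suminf be"
  define Qr where "Qr = suminf ga + suminf de"
  define s where "s = (1 + \<eta>) / 2"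
  define t where "t = (1 - \<eta>) / 2"
  have eta1: "-1 \<le> \<eta>" "\<eta> \<le> 1" using eta abs_square_le_1[of \<eta>] by auto
  have st: "0 \<le> s" "0 \<le> t" "s + t = 1" using eta1 by (auto simp: s_def t_def field_simps)
  have PQ: "0 < Pr" "0 < Qr" using A1 D1 suminf_nonneg[OF sm(2) nn(2)] suminf_nonneg[OF sm(3) nn(3)]
    by (auto simp: Pr_def Qr_def)
  define c1 where "c1 = t * Pr + s * Qr"
  define c2 where "c2 = s * Pr + t * Qr"
  have c12: "0 < c1" "0 < c2"
  proof -
    have "0 < t * Pr + s * Qr"
    proof (cases "t = 0")
      case True then show ?thesis using st PQ by simp
    next
      case False then show ?thesis using st PQ by (simp add: add_pos_nonneg)
    qed
    moreover have "0 < s * Pr + t * Qr"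
    proof (cases "t = 0")
      case True then show ?thesis using st PQ by simp
    next
      case False then show ?thesis using st PQ by (simp add: add_nonneg_pos)
    qed
    ultimately show "0 < c1" "0 < c2" by (auto simp: c1_def c2_def)
  qed
  define be1 where "be1 = (\<lambda>z. complex_of_real t * B z + complex_of_real s * C z)"
  define be2 where "be2 = (\<lambda>z. complex_of_real s * B z + complex_of_real t * C z)"
  define L1 where "L1 = (\<lambda>z. z ^ K * complex_of_real c1 - be1 z)"
  define L2 where "L2 = (\<lambda>z. z ^ K * complex_of_real c2 - be2 z)"
  define f1 where "f1 = (\<lambda>z. - 4 * (L1 z * L2 z))"
  define g1 where "g1 = (\<lambda>z. 4 * complex_of_real (\<eta>\<^sup>2) * (A z * D z))"
  define f2 where "f2 = (\<lambda>z. - 4 * (z ^ K * complex_of_real c1 * L2 z))"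
  define g2 where "g2 = (\<lambda>z. 4 * (be1 z * L2 z))"
  define f3 where "f3 = (\<lambda>z. (- 4 * complex_of_real (c1 * c2)) * z ^ (2 * K))"
  define g3 where "g3 = (\<lambda>z. 4 * (z ^ K * complex_of_real c1 * be2 z))"
  have hA: "A holomorphic_on ball 0 1" unfolding A_def by (rule powc_holo[OF sm(1)])
  have hB: "B holomorphic_on ball 0 1" unfolding B_def by (rule powc_holo[OF sm(2)])
  have hC: "C holomorphic_on ball 0 1" unfolding C_def by (rule powc_holo[OF sm(3)])
  have hD: "D holomorphic_on ball 0 1" unfolding D_def by (rule powc_holo[OF sm(4)])
  note hol = hA hB hC hD
  have hf1: "f1 holomorphic_on ball 0 1" unfolding f1_def L1_def L2_def be1_def be2_def
    by (intro holomorphic_intros hol)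
  have hg1: "g1 holomorphic_on ball 0 1" unfolding g1_def by (intro holomorphic_intros hol)
  have hf2: "f2 holomorphic_on ball 0 1" unfolding f2_def L2_def be2_def by (intro holomorphic_intros hol)
  have hg2: "g2 holomorphic_on ball 0 1" unfolding g2_def L2_def be1_def be2_def by (intro holomorphic_intros hol)
  have hf3: "f3 holomorphic_on ball 0 1" unfolding f3_def by (intro holomorphic_intros hol)
  have hg3: "g3 holomorphic_on ball 0 1" unfolding g3_def be2_def by (intro holomorphic_intros hol)
  have hG: "G holomorphic_on ball 0 1"
  proof -
    have "G = (\<lambda>z. complex_of_real (\<eta>\<^sup>2) *
        ((z ^ K * complex_of_real (suminf al + suminf be - suminf ga - suminf de) - B z + C z)\<^sup>2
          + 4 * A z * D z)
        - (B z + C z - z ^ K * complex_of_real (suminf al + suminf be + suminf ga + suminf de))\<^sup>2)"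
      using Gdef by (simp add: fun_eq_iff A_def B_def C_def D_def)
    moreover have "(\<lambda>z. complex_of_real (\<eta>\<^sup>2) *
        ((z ^ K * complex_of_real (suminf al + suminf be - suminf ga - suminf de) - B z + C z)\<^sup>2
          + 4 * A z * D z)
        - (B z + C z - z ^ K * complex_of_real (suminf al + suminf be + suminf ga + suminf de))\<^sup>2) holomorphic_on ball 0 1"
      by (intro holomorphic_intros hol)
    ultimately show ?thesis by simp
  qed
  have idG: "G z = f1 z + g1 z" for z
  proof -
    define E where "E = complex_of_real \<eta>"
    define a where "a = complex_of_real (suminf al)"
    define b where "b = complex_of_real (suminf be)"
    define c where "c = complex_of_real (suminf ga)"
    define d where "d = complex_of_real (suminf de)"
    have "G z = E^2 * ((z ^ K*(a+b-c-d) - B z + C z)^2 + 4*A z*D z) - (B z + C z - z ^ K*(a+b+c+d))^2"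
      by (simp add: Gdef A_def B_def C_def D_def E_def a_def b_def c_def d_def)
    also have "\<dots> = -4*((z ^ K*((1-E)/2*(a+b) + (1+E)/2*(c+d)) - ((1-E)/2*B z + (1+E)/2*C z))
        * (z ^ K*((1+E)/2*(a+b)+(1-E)/2*(c+d)) - ((1+E)/2*B z + (1-E)/2*C z))) + 4*E^2*(A z*D z)"
      by (rule idG_alg)
    also have "\<dots> = f1 z + g1 z"
      by (simp add: f1_def g1_def L1_def L2_def be1_def be2_def c1_def c2_def s_def t_def Pr_def Qr_def
           E_def a_def b_def c_def d_def)
    finally show ?thesis .
  qed
  have id1: "f1 z = f2 z + g2 z" for z
    unfolding f1_def f2_def g2_def L1_def by (simp add: algebra_simps)
  have id2: "f2 z = f3 z + g3 z" for z
  proof -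
    have zz: "z ^ (2 * K) = z ^ K * z ^ K" "z ^ (K * 2) = z ^ K * z ^ K" by (simp_all add: mult_2 mult_2_right power_add)
    show ?thesis unfolding f2_def f3_def g3_def L2_def zz(1) by (simp add: algebra_simps zz(2))
  qed
  have est: "norm (g1 z) < norm (f1 z) \<and> norm (g2 z) < norm (f2 z) \<and> norm (g3 z) < norm (f3 z)"
    if z: "r0 < norm z" "norm z < 1" for z
  proof -
    define r where "r = norm z"
    have r: "r0 < r" "r < 1" "0 \<le> r" using z by (auto simp: r_def)
    note k = key[OF r(1) r(2)]
    define Ar where "Ar = Rr al r"
    define Brr where "Brr = Rr be r"
    define Crr where "Crr = Rr ga r"
    define Dr where "Dr = Rr de r"
    define ur where "ur = r ^ K * Pr - Brr"
    define vr where "vr = r ^ K * Qr - Crr"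
    have kk: "0 < ur" "0 < vr" "Ar * Dr < ur * vr"
      using k by (auto simp: ur_def vr_def Ar_def Brr_def Crr_def Dr_def Pr_def Qr_def)
    have z1: "norm z \<le> 1" using z by simp
    have nA: "norm (A z) \<le> Ar" unfolding A_def Ar_def r_def by (rule powc_norm[OF nn(1) sm(1) z1])
    have nB: "norm (B z) \<le> Brr" unfolding B_def Brr_def r_def by (rule powc_norm[OF nn(2) sm(2) z1])
    have nC: "norm (C z) \<le> Crr" unfolding C_def Crr_def r_def by (rule powc_norm[OF nn(3) sm(3) z1])
    have nD: "norm (D z) \<le> Dr" unfolding D_def Dr_def r_def by (rule powc_norm[OF nn(4) sm(4) z1])
    have nw: "norm (z ^ K) = r ^ K" by (simp add: r_def norm_power)
    have PQ0: "0 \<le> Pr" "0 \<le> Qr" using PQ by auto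
    have l1: "t * ur + s * vr \<le> norm (L1 z)"
      using lin_lb[OF st(2) st(1) PQ0 nw nB nC] by (simp add: L1_def be1_def c1_def ur_def vr_def)
    have l2: "s * ur + t * vr \<le> norm (L2 z)"
      using lin_lb[OF st(1) st(2) PQ0 nw nB nC] by (simp add: L2_def be2_def c2_def ur_def vr_def)
    have pos1: "0 < t * ur + s * vr"
    proof (cases "t = 0")
      case True then show ?thesis using st kk by simp
    next
      case False then have "0 < t * ur" using st kk by simp
      moreover have "0 \<le> s * vr" using st kk by simp
      ultimately show ?thesis by linarith
    qed
    have pos2: "0 < s * ur + t * vr"
    proof (cases "t = 0")
      case True then show ?thesis using st kk by simp
    next
      case False then have "0 < t * vr" using st kk by simp
      moreover have "0 \<le> s * ur" using st kk by simp
      ultimately show ?thesis by linarith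
    qed
    have pl: "ur * vr \<le> (t * ur + s * vr) * (s * ur + t * vr)" by (rule prod_lb[OF st(2) st(1) st(3)])
    have LL: "(t * ur + s * vr) * (s * ur + t * vr) \<le> norm (L1 z) * norm (L2 z)"
      using l1 l2 pos1 pos2 by (intro mult_mono) auto
    have e2: "\<eta>\<^sup>2 \<ge> 0" by simp
    have AD: "norm (A z) * norm (D z) \<le> Ar * Dr" proof -
      have "0 \<le> Ar" using nA norm_ge_zero[of "A z"] by linarith
      then show ?thesis using nA nD by (intro mult_mono) auto
    qed
    have "norm (g1 z) = 4 * \<eta>\<^sup>2 * (norm (A z) * norm (D z))"
      by (simp add: g1_def norm_mult norm_power)
    also have "\<dots> \<le> 4 * 1 * (norm (A z) * norm (D z))"
      using eta by (intro mult_right_mono mult_left_mono) auto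
    also have "\<dots> \<le> 4 * (Ar * Dr)" using AD by simp
    also have "\<dots> < 4 * (ur * vr)" using kk by simp
    also have "\<dots> \<le> 4 * (norm (L1 z) * norm (L2 z))" using pl LL by simp
    also have "\<dots> = norm (f1 z)" by (simp add: f1_def norm_mult)
    finally have g1f1: "norm (g1 z) < norm (f1 z)" .
    have nb1: "norm (be1 z) \<le> t * Brr + s * Crr"
    proof -
      have "norm (be1 z) \<le> norm (complex_of_real t * B z) + norm (complex_of_real s * C z)"
        unfolding be1_def by (rule norm_triangle_ineq)
      also have "\<dots> = t * norm (B z) + s * norm (C z)" using st by (simp add: norm_mult)
      also have "\<dots> \<le> t * Brr + s * Crr" using st nB nC by (intro add_mono mult_left_mono) auto
      finally show ?thesis .
    qed
    have nb2: "norm (be2 z) \<le> s * Brr + t * Crr"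
    proof -
      have "norm (be2 z) \<le> norm (complex_of_real s * B z) + norm (complex_of_real t * C z)"
        unfolding be2_def by (rule norm_triangle_ineq)
      also have "\<dots> = s * norm (B z) + t * norm (C z)" using st by (simp add: norm_mult)
      also have "\<dots> \<le> s * Brr + t * Crr" using st nB nC by (intro add_mono mult_left_mono) auto
      finally show ?thesis .
    qed
    have b1lt: "norm (be1 z) < r ^ K * c1"
    proof -
      have "r ^ K * c1 - (t * Brr + s * Crr) = t * ur + s * vr"
        by (simp add: c1_def ur_def vr_def algebra_simps)
      then show ?thesis using nb1 pos1 by linarith
    qed
    have b2lt: "norm (be2 z) < r ^ K * c2"
    proof -
      have "r ^ K * c2 - (s * Brr + t * Crr) = s * ur + t * vr"
        by (simp add: c2_def ur_def vr_def algebra_simps)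
      then show ?thesis using nb2 pos2 by linarith
    qed
    have L2pos: "0 < norm (L2 z)" using l2 pos2 by linarith
    have rK: "0 < r ^ K"
    proof -
      have "0 < r" using r k by auto
      then show ?thesis by simp
    qed
    have "norm (g2 z) = 4 * (norm (be1 z) * norm (L2 z))" by (simp add: g2_def norm_mult)
    also have "\<dots> < 4 * ((r ^ K * c1) * norm (L2 z))"
      using b1lt L2pos by (intro mult_strict_left_mono mult_strict_right_mono) auto
    also have "\<dots> = norm (f2 z)" using c12 by (simp add: f2_def norm_mult nw)
    finally have g2f2: "norm (g2 z) < norm (f2 z)" .
    have "norm (g3 z) = 4 * ((r ^ K * c1) * norm (be2 z))" using c12 by (simp add: g3_def norm_mult nw)
    also have "\<dots> < 4 * ((r ^ K * c1) * (r ^ K * c2))"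
      using b2lt rK c12 by (intro mult_strict_left_mono mult_strict_right_mono) auto
    also have "\<dots> = norm (f3 z)"
    proof -
      have n1: "norm (- 4 * complex_of_real (c1 * c2)) = 4 * (c1 * c2)" using c12 by (simp add: norm_mult)
      have n2: "norm (z ^ (2 * K)) = r ^ K * r ^ K" by (simp only: norm_power norm_mult r_def mult_2 power_add)
      have "norm (f3 z) = norm (- 4 * complex_of_real (c1 * c2)) * norm (z ^ (2 * K))"
        unfolding f3_def by (rule norm_mult)
      also have "\<dots> = 4 * (c1 * c2) * (r ^ K * r ^ K)" by (simp only: n1 n2)
      finally have "norm (f3 z) = 4 * (c1 * c2) * (r ^ K * r ^ K)" .
      then show ?thesis by (simp add: algebra_simps)
    qed
    finally have g3f3: "norm (g3 z) < norm (f3 z)" .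
    show ?thesis using g1f1 g2f2 g3f3 by blast
  qed
  define \<rho> where "\<rho> = (max r0 0 + 1) / 2"
  have rho: "r0 < \<rho>" "\<rho> < 1" "0 < \<rho>" using r0 by (auto simp: \<rho>_def)
  have R1: "finite {p\<in>ball 0 \<rho>. G p = 0} \<and> finite {p\<in>ball 0 \<rho>. f1 p = 0} \<and>
   (\<Sum>p\<in>{p\<in>ball 0 \<rho>. G p = 0}. zorder G p) = (\<Sum>p\<in>{p\<in>ball 0 \<rho>. f1 p = 0}. zorder f1 p)"
    by (rule rouche_disc'[OF hf1 hg1 rho(3) rho(2) _ idG]) (use est rho in auto)
  have R2: "finite {p\<in>ball 0 \<rho>. f1 p = 0} \<and> finite {p\<in>ball 0 \<rho>. f2 p = 0} \<and>
   (\<Sum>p\<in>{p\<in>ball 0 \<rho>. f1 p = 0}. zorder f1 p) = (\<Sum>p\<in>{p\<in>ball 0 \<rho>. f2 p = 0}. zorder f2 p)"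
    by (rule rouche_disc'[OF hf2 hg2 rho(3) rho(2) _ id1]) (use est rho in auto)
  have R3: "finite {p\<in>ball 0 \<rho>. f2 p = 0} \<and> finite {p\<in>ball 0 \<rho>. f3 p = 0} \<and>
   (\<Sum>p\<in>{p\<in>ball 0 \<rho>. f2 p = 0}. zorder f2 p) = (\<Sum>p\<in>{p\<in>ball 0 \<rho>. f3 p = 0}. zorder f3 p)"
    by (rule rouche_disc'[OF hf3 hg3 rho(3) rho(2) _ id2]) (use est rho in auto)
  have cnz: "- 4 * complex_of_real (c1 * c2) \<noteq> 0" using c12 by simp
  have R4: "(\<Sum>p\<in>{p\<in>ball 0 \<rho>. f3 p = 0}. zorder f3 p) = int (2 * K)"
    unfolding f3_def by (rule mono_count[OF cnz _ rho(3)]) (use K in simp)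
  have sumG: "(\<Sum>p\<in>{p\<in>ball 0 \<rho>. G p = 0}. zorder G p) = int (2 * K)"
    using R1 R2 R3 R4 by simp
  have Zeq: "{z. norm z < 1 \<and> G z = 0} = {p\<in>ball 0 \<rho>. G p = 0}"
  proof (intro set_eqI iffI)
    fix z assume z: "z \<in> {z. norm z < 1 \<and> G z = 0}"
    show "z \<in> {p\<in>ball 0 \<rho>. G p = 0}"
    proof (rule ccontr)
      assume "z \<notin> {p\<in>ball 0 \<rho>. G p = 0}"
      then have "norm z \<ge> \<rho>" using z by auto
      then have "norm (g1 z) < norm (f1 z)" using est[of z] z rho by auto
      then have "f1 z + g1 z \<noteq> 0"
        by (metis add.commute add_eq_0_iff norm_minus_cancel order_less_irrefl)
      then show False using z idG by simp
    qed
  next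
    fix z assume "z \<in> {p\<in>ball 0 \<rho>. G p = 0}"
    then show "z \<in> {z. norm z < 1 \<and> G z = 0}" using rho by auto
  qed
  have fin: "finite {z. norm z < 1 \<and> G z = 0}" using R1 Zeq by simp
  have Gnz: "\<exists>w\<in>ball 0 1. G w \<noteq> 0"
  proof -
    have w: "norm (complex_of_real \<rho>) = \<rho>" using rho by simp
    have "norm (g1 (complex_of_real \<rho>)) < norm (f1 (complex_of_real \<rho>))" using est[of "complex_of_real \<rho>"] rho w by auto
    then have "f1 (complex_of_real \<rho>) + g1 (complex_of_real \<rho>) \<noteq> 0"
      by (metis add.commute add_eq_0_iff norm_minus_cancel order_less_irrefl)
    then show ?thesis using idG rho by (intro bexI[of _ "complex_of_real \<rho>"]) auto
  qed
  have zpos: "0 \<le> zorder G p" if "p \<in> {p\<in>ball 0 \<rho>. G p = 0}" for p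
  proof -
    have "p \<in> ball 0 1" using that rho by auto
    from zorder_exist_zero[OF hG _ _ this Gnz] show ?thesis using that by auto
  qed
  have "int (\<Sum>z\<in>{p\<in>ball 0 \<rho>. G p = 0}. nat (zorder G z)) = (\<Sum>z\<in>{p\<in>ball 0 \<rho>. G p = 0}. zorder G z)"
    by (simp add: of_nat_sum zpos)
  then have "(\<Sum>z\<in>{p\<in>ball 0 \<rho>. G p = 0}. nat (zorder G z)) = 2 * K" using sumG by linarith
  then show ?thesis using fin Zeq by simp
qed



lemma gen_fun_powc: "gen_fun K r = powc (\<lambda>n. r (int K - int n))"
  by (simp add: gen_fun_def powc_def fun_eq_iff)

theorem lemma5:
  fixes c K :: nat
    and a b cr d :: "int \<Rightarrow> real"
    and V :: "'v set" and qVV :: "'v \<Rightarrow> 'v \<Rightarrow> real"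
    and qVW :: "'v \<Rightarrow> wstate \<Rightarrow> real" and qWV :: "wstate \<Rightarrow> 'v \<Rightarrow> real"
    and x :: "nat \<Rightarrow> real"
  assumes c_pos: "c \<ge> 1" and K_pos: "K \<ge> 1"
    and proc: "sym_process c K a b cr d V qVV qVW qWV"
    and A_i: "summable (\<lambda>n. a (int K - int n))" "summable (\<lambda>n. b (int K - int n))"
             "summable (\<lambda>n. cr (int K - int n))" "summable (\<lambda>n. d (int K - int n))"
    and A_ii: "gen_at1 K a > 0" "gen_at1 K d > 0"
    and A_iii: "summable (\<lambda>n. real n * a (int K - int n))"
               "summable (\<lambda>n. real n * b (int K - int n))"
               "summable (\<lambda>n. real n * cr (int K - int n))"
               "summable (\<lambda>n. real n * d (int K - int n))"
    and A_iv: "a (int K) = 0 \<or> d (int K) = 0"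
    and A_v: "b (int K) = cr (int K)" "b (int K) \<noteq> 0"
    and E_s: "0 < gen_at1 K d * (gen_deriv_at1 K a - real K * gen_at1 K a
                                   + gen_deriv_at1 K b - real K * gen_at1 K b)
                 + gen_at1 K a * (gen_deriv_at1 K cr - real K * gen_at1 K cr
                                   + gen_deriv_at1 K d - real K * gen_at1 K d)"
    and x_pm: "\<forall>i\<in>{1..c}. x i = 1 \<or> x i = -1"
  shows
    "let \<eta> = - (1 / real c) * (\<Sum>i=1..c. x i);
         A = gen_fun K a; B = gen_fun K b; C = gen_fun K cr; D = gen_fun K d;
         S = gen_at1 K a + gen_at1 K b + gen_at1 K cr + gen_at1 K d;
         F = (\<lambda>z. z ^ K * complex_of_real (gen_at1 K a + gen_at1 K b - gen_at1 K cr - gen_at1 K d)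
                  - B z + C z);
         G = (\<lambda>z. complex_of_real (\<eta>\<^sup>2) * ((F z)\<^sup>2 + 4 * A z * D z)
                  - (B z + C z - z ^ K * complex_of_real S)\<^sup>2)
     in finite {z. norm z < 1 \<and> G z = 0} \<and>
        (\<Sum>z\<in>{z. norm z < 1 \<and> G z = 0}. nat (zorder G z)) = 2 * K"
proof -
  define \<eta> where "\<eta> = - (1 / real c) * (\<Sum>i=1..c. x i)"
  define G where "G = (\<lambda>z. complex_of_real (\<eta>\<^sup>2) *
      ((z ^ K * complex_of_real (gen_at1 K a + gen_at1 K b - gen_at1 K cr - gen_at1 K d)
        - gen_fun K b z + gen_fun K cr z)\<^sup>2 + 4 * gen_fun K a z * gen_fun K d z)
      - (gen_fun K b z + gen_fun K cr z - z ^ K * complex_of_real (gen_at1 K a + gen_at1 K b + gen_at1 K cr + gen_at1 K d))\<^sup>2)"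
  have nn0: "\<forall>k \<le> int K. a k \<ge> 0 \<and> b k \<ge> 0 \<and> cr k \<ge> 0 \<and> d k \<ge> 0"
    using proc by (simp add: sym_process_def)
  have nn: "\<And>n. a (int K - int n) \<ge> 0" "\<And>n. b (int K - int n) \<ge> 0"
    "\<And>n. cr (int K - int n) \<ge> 0" "\<And>n. d (int K - int n) \<ge> 0"
    using nn0 by auto
  have eta: "\<eta>\<^sup>2 \<le> 1"
  proof -
    have "\<bar>\<Sum>i=1..c. x i\<bar> \<le> (\<Sum>i=1..c. \<bar>x i\<bar>)" by (rule sum_abs)
    also have "\<dots> = (\<Sum>i=1..c. 1)" proof (intro sum.cong refl)
      fix i assume "i \<in> {1..c}"
      then have "x i = 1 \<or> x i = -1" using x_pm by blast
      then show "\<bar>x i\<bar> = 1" by auto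
    qed
    also have "\<dots> = real c" by simp
    finally have "\<bar>\<Sum>i=1..c. x i\<bar> \<le> real c" .
    then have "\<bar>\<eta>\<bar> \<le> 1" using c_pos by (simp add: \<eta>_def abs_mult field_simps)
    then show ?thesis by (simp add: abs_square_le_1)
  qed
  have res: "finite {z. norm z < 1 \<and> G z = 0} \<and> (\<Sum>z\<in>{z. norm z < 1 \<and> G z = 0}. nat (zorder G z)) = 2 * K"
  proof (rule main_count[OF K_pos nn A_i A_iii _ _ _ eta])
    show "0 < (\<Sum>n. a (int K - int n))" using A_ii by (simp add: gen_at1_def)
    show "0 < (\<Sum>n. d (int K - int n))" using A_ii by (simp add: gen_at1_def)
    show "0 < (\<Sum>n. d (int K - int n)) *
      ((\<Sum>n. real n * a (int K - int n)) - real K * (\<Sum>n. a (int K - int n)) + (\<Sum>n. real n * b (int K - int n)) -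
       real K * (\<Sum>n. b (int K - int n))) +
      (\<Sum>n. a (int K - int n)) *
      ((\<Sum>n. real n * cr (int K - int n)) - real K * (\<Sum>n. cr (int K - int n)) + (\<Sum>n. real n * d (int K - int n)) -
       real K * (\<Sum>n. d (int K - int n)))"
      using E_s by (simp add: gen_at1_def gen_deriv_at1_def)
    fix z
    show "G z = complex_of_real (\<eta>\<^sup>2) *
        ((z ^ K * complex_of_real ((\<Sum>n. a (int K - int n)) + (\<Sum>n. b (int K - int n)) - (\<Sum>n. cr (int K - int n)) - (\<Sum>n. d (int K - int n)))
          - powc (\<lambda>n. b (int K - int n)) z + powc (\<lambda>n. cr (int K - int n)) z)\<^sup>2
          + 4 * powc (\<lambda>n. a (int K - int n)) z * powc (\<lambda>n. d (int K - int n)) z)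
        - (powc (\<lambda>n. b (int K - int n)) z + powc (\<lambda>n. cr (int K - int n)) z
           - z ^ K * complex_of_real ((\<Sum>n. a (int K - int n)) + (\<Sum>n. b (int K - int n)) + (\<Sum>n. cr (int K - int n)) + (\<Sum>n. d (int K - int n))))\<^sup>2"
      by (simp only: G_def gen_fun_powc gen_at1_def)
  qed
  show ?thesis unfolding Let_def using res by (simp only: G_def \<eta>_def)
qed


end
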